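(* Let $p\ge1$, $X=\{0,1,\dots,p\}$, and for $i\in\{1,\dots,p\}$ let $e_i$ be the transformation of $X^\ast$ defined recursively by $e_i(0w)=i\,e_i(w)$, $e_i(iw)=0w$, $e_i(jw)=jw$ for $j\notin\{0,i\}$. For $n\ge1$ let $A_n=\sum_{i=1}^p\bigl(M^{(n)}_i+(M^{(n)}_i)^{-1}\bigr)$ with $M^{(n)}_i$ the permutation matrix of $e_i$ on $X^n$, let $P_n(\lambda)=\det(\lambda I-A_n)$, $f_p(\lambda)=\lambda^2-2(p-1)\lambda-2p$, and $f_p^{\circ i}$ its $i$-fold iterate. Then for each $n\ge1$ $$P_n(\lambda)=(\lambda-2p)\prod_{i=0}^{n-1}\bigl(f_p^{\circ i}(\lambda)+2\bigr)\prod_{i=0}^{n-1}\bigl(f_p^{\circ i}(\lambda)-2(p-1)\bigr)^{(p-1)(p+1)^{n-i-1}}.$$ In particular the spectrum of $A_n$ (as a multiset) is the union of $\{2p\}$, the sets $f_p^{-i}(-2)$ for $i=0,\dots,n-1$, and the sets $f_p^{-i}(2(p-1))$ for $i=0,\dots,n-1$, each element of the latter counted with multiplicity $(p-1)(p+1)^{n-i-1}$.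
   Context: $f_p^{-i}(x)$ denotes the multiset of roots of $f_p^{\circ i}(\lambda)-x$. $A_n$ is the adjacency matrix of the $n$-th Schreier graph of the star automaton group $\mathcal G_{S_p}=\langle e_1,\dots,e_p\rangle$. *)

theory Defs
  imports "Jordan_Normal_Form.Char_Poly" "HOL-Computational_Algebra.Polynomial"
begin

fun star_gen :: "nat \<Rightarrow> nat list \<Rightarrow> nat list" where
  "star_gen i [] = []"
| "star_gen i (x # w) =
     (if x = 0 then i # star_gen i w else if x = i then 0 # w else x # w)"

text \<open>Enumeration of X^n: index k < (p+1)^n corresponds to the word whose
  j-th letter is the j-th base-(p+1) digit of k.\<close>
definition word_of :: "nat \<Rightarrow> nat \<Rightarrow> nat \<Rightarrow> nat list" where
  "word_of p n k = map (\<lambda>j. k div (p + 1) ^ j mod (p + 1)) [0..<n]"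

definition perm_mat :: "nat \<Rightarrow> nat \<Rightarrow> nat \<Rightarrow> real mat" where
  "perm_mat p n i = mat ((p + 1) ^ n) ((p + 1) ^ n)
     (\<lambda>(a, b). if star_gen i (word_of p n b) = word_of p n a then 1 else 0)"

text \<open>Adjacency matrix A_n = sum_i (M_i + M_i^{-1}); the inverse of a permutation
  matrix is its transpose.\<close>
definition schreier_adj :: "nat \<Rightarrow> nat \<Rightarrow> real mat" where
  "schreier_adj p n = mat ((p + 1) ^ n) ((p + 1) ^ n)
     (\<lambda>(a, b). \<Sum>i\<in>{1..p}. perm_mat p n i $$ (a, b) + transpose_mat (perm_mat p n i) $$ (a, b))"

definition fp :: "nat \<Rightarrow> 'a :: comm_ring_1 poly" where
  "fp p = [: - 2 * of_nat p, - 2 * (of_nat p - 1), 1 :]"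

definition fp_iter :: "nat \<Rightarrow> nat \<Rightarrow> 'a :: comm_ring_1 poly" where
  "fp_iter p i = ((\<lambda>q. pcompose (fp p) q) ^^ i) [:0, 1:]"

end

theory Submission
  imports Defs
begin

lemma word_of_Suc: "word_of p (Suc n) k = k mod (p+1) # word_of p n (k div (p+1))"
proof -
  have u: "[0..<Suc n] = 0 # map Suc [0..<n]" by (simp add: map_Suc_upt upt_conv_Cons del: upt_Suc)
  have "k div (p+1)^Suc j mod (p+1) = k div (p+1) div (p+1)^j mod (p+1)" for j
    by (simp only: power_Suc div_mult2_eq)
  then show ?thesis unfolding word_of_def u by simp
qed

lemma word_of_0[simp]: "word_of p 0 k = []" by (simp add: word_of_def)

lemma word_of_plus: assumes "x \<le> p" shows "word_of p (Suc n) (x + (p+1)*k) = x # word_of p n k"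
proof -
  have a: "(x+(p+1)*k) mod (p+1) = x" using assms by (simp only: mod_mult_self2) (simp add: le_imp_less_Suc)
  have b: "(x+(p+1)*k) div (p+1) = k" using assms by (simp only: div_mult_self2) (simp add: le_imp_less_Suc)
  show ?thesis by (simp only: word_of_Suc a b)
qed

lemma length_word_of[simp]: "length (word_of p n k) = n" by (simp add: word_of_def)

lemma set_word_of: "set (word_of p n k) \<subseteq> {..p}"
  by (auto simp: word_of_def)

lemma word_of_inj: "k < (p+1)^n \<Longrightarrow> l < (p+1)^n \<Longrightarrow> word_of p n k = word_of p n l \<Longrightarrow> k = l"
proof (induction n arbitrary: k l)
  case 0 then show ?case by simp
next
  case (Suc n)
  have "k div (p+1) < (p+1)^n" "l div (p+1) < (p+1)^n" using Suc.prems
    by (auto simp: less_mult_imp_div_less mult.commute)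
  moreover have "k mod (p+1) = l mod (p+1)" "word_of p n (k div (p+1)) = word_of p n (l div (p+1))"
    using Suc.prems(3) by (auto simp: word_of_Suc)
  ultimately have "k div (p+1) = l div (p+1)" "k mod (p+1) = l mod (p+1)" using Suc.IH by auto
  then show ?case by (metis div_mult_mod_eq)
qed

fun widx :: "nat \<Rightarrow> nat list \<Rightarrow> nat" where
  "widx p [] = 0"
| "widx p (x # w) = x + (p+1) * widx p w"

lemma widx_bound: "set w \<subseteq> {..p} \<Longrightarrow> widx p w < (p+1)^length w"
proof (induction w)
  case Nil then show ?case by simp
next
  case (Cons x w)
  then have "widx p w < (p+1)^length w" "x \<le> p" by auto
  then have "x + (p+1) * widx p w < (p+1) + (p+1) * widx p w" by simp
  also have "\<dots> = (p+1) * (widx p w + 1)" by (simp add: algebra_simps)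
  also have "\<dots> \<le> (p+1) * (p+1)^length w" using \<open>widx p w < _\<close>
    by (intro mult_le_mono2) simp
  finally show ?case by simp
qed

lemma word_of_widx: "set w \<subseteq> {..p} \<Longrightarrow> word_of p (length w) (widx p w) = w"
proof (induction w)
  case Nil then show ?case by simp
next
  case (Cons x w)
  have "word_of p (length (x#w)) (widx p (x#w)) = word_of p (Suc (length w)) (x + (p+1)*widx p w)"
    by simp
  also have "\<dots> = x # word_of p (length w) (widx p w)" using Cons.prems by (intro word_of_plus) auto
  finally show ?case using Cons by simp
qed

lemma star_gen_length[simp]: "length (star_gen i w) = length w"
  by (induction w) auto

lemma star_gen_set: "i \<le> p \<Longrightarrow> set w \<subseteq> {..p} \<Longrightarrow> set (star_gen i w) \<subseteq> {..p}"
  by (induction w) auto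

lemma star_gen_inj: "1 \<le> i \<Longrightarrow> star_gen i w = star_gen i v \<Longrightarrow> w = v"
proof (induction w arbitrary: v)
  case Nil then show ?case by (cases v) (auto split: if_splits)
next
  case (Cons x w)
  then show ?case by (cases v) (auto split: if_splits)
qed


lemma idx_bound: assumes "(x::nat) \<le> p" "k < (p+1)^n" shows "x + (p+1)*k < (p+1)^Suc n"
proof -
  have "x + (p+1)*k < (p+1) + (p+1)*k" using assms(1) by linarith
  also have "\<dots> = (p+1)*(k+1)" by (simp add: algebra_simps)
  also have "\<dots> \<le> (p+1)*(p+1)^n" using assms by (intro mult_le_mono2) simp
  finally show ?thesis by simp
qed

definition sgi :: "nat \<Rightarrow> nat \<Rightarrow> nat \<Rightarrow> nat \<Rightarrow> nat" where
  "sgi p n i b = widx p (star_gen i (word_of p n b))"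

lemma sgi_word: "i \<le> p \<Longrightarrow> word_of p n (sgi p n i b) = star_gen i (word_of p n b)"
  unfolding sgi_def using word_of_widx[of "star_gen i (word_of p n b)" p]
    star_gen_set[OF _ set_word_of, of i p n b] by simp

lemma sgi_bound: "i \<le> p \<Longrightarrow> sgi p n i b < (p+1)^n"
  unfolding sgi_def using widx_bound[of "star_gen i (word_of p n b)" p]
    star_gen_set[OF _ set_word_of, of i p n b] by simp

lemma perm_mat_index: "a < (p+1)^n \<Longrightarrow> b < (p+1)^n \<Longrightarrow>
  perm_mat p n i $$ (a,b) = (if star_gen i (word_of p n b) = word_of p n a then 1 else 0)"
  by (simp add: perm_mat_def)

lemma perm_mat_sgi: assumes "i \<le> p" "a < (p+1)^n" "b < (p+1)^n"
  shows "perm_mat p n i $$ (a,b) = (if a = sgi p n i b then 1 else 0)"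
proof -
  have "(star_gen i (word_of p n b) = word_of p n a) = (a = sgi p n i b)"
    using word_of_inj[OF assms(2) sgi_bound[OF assms(1)]] sgi_word[OF assms(1)] by metis
  then show ?thesis using assms by (simp add: perm_mat_index)
qed

lemma sgi_inj: assumes "1 \<le> i" "i \<le> p" "sgi p n i b = sgi p n i b'" shows "word_of p n b = word_of p n b'"
  using sgi_word[OF assms(2), of n b] sgi_word[OF assms(2), of n b'] assms(3) star_gen_inj[OF assms(1)]
  by metis

lemma perm_mat_Suc:
  assumes i: "1 \<le> i" "i \<le> p" and xy: "x \<le> p" "y \<le> p" and kl: "k < (p+1)^n" "l < (p+1)^n"
  shows "perm_mat p (Suc n) i $$ (x+(p+1)*k, y+(p+1)*l) =
    (if y = 0 then (if x = i then perm_mat p n i $$ (k,l) else 0)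
     else if y = i then (if x = 0 \<and> k = l then 1 else 0)
     else (if x = y \<and> k = l then 1 else 0))"
proof -
  have w: "(word_of p n l = word_of p n k) = (l = k)" using word_of_inj[OF kl(2) kl(1)] by auto
  have "perm_mat p (Suc n) i $$ (x+(p+1)*k, y+(p+1)*l) =
     (if star_gen i (y # word_of p n l) = x # word_of p n k then 1 else 0)"
    by (simp only: perm_mat_index[OF idx_bound[OF xy(1) kl(1)] idx_bound[OF xy(2) kl(2)]]
          word_of_plus[OF xy(1)] word_of_plus[OF xy(2)])
  then show ?thesis
    using i by (simp add: perm_mat_index[OF kl] w eq_commute[of l k])
qed


lemma perm_mat_dims[simp]: "dim_row (perm_mat p n i) = (p+1)^n" "dim_col (perm_mat p n i) = (p+1)^n"
  by (simp_all add: perm_mat_def)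

lemma schreier_adj_carrier[simp]: "schreier_adj p n \<in> carrier_mat ((p+1)^n) ((p+1)^n)"
  by (simp add: schreier_adj_def)

lemma schreier_adj_index: "a < (p+1)^n \<Longrightarrow> b < (p+1)^n \<Longrightarrow>
  schreier_adj p n $$ (a,b) = (\<Sum>i\<in>{1..p}. perm_mat p n i $$ (a,b) + perm_mat p n i $$ (b,a))"
  by (simp add: schreier_adj_def)

lemma sum_count: assumes "y \<in> {1..p}"
  shows "(\<Sum>i\<in>{1..p}. if y = i then 0 else c) = (real p - 1) * (c::real)"
proof -
  have "(\<Sum>i\<in>{1..p}. if y = i then 0 else c) = (if y = y then 0 else c) + (\<Sum>i\<in>{1..p} - {y}. if y = i then 0 else c)"
    using assms by (subst sum.remove[of _ y]) auto
  also have "(\<Sum>i\<in>{1..p} - {y}. if y = i then 0 else c) = (\<Sum>i\<in>{1..p} - {y}. c)"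
    by (rule sum.cong) auto
  also have "\<dots> = real (p - 1) * c" using assms by simp
  also have "real (p - 1) = real p - 1" using assms by auto
  finally show ?thesis by simp
qed

lemma adj_Suc:
  assumes xy: "x \<le> p" "y \<le> p" and kl: "k < (p+1)^n" "l < (p+1)^n"
  shows "schreier_adj p (Suc n) $$ (x+(p+1)*k, y+(p+1)*l) =
    (if x = 0 then (if y = 0 then 0 else (if k = l then 1 else 0) + perm_mat p n y $$ (l,k))
     else if y = 0 then perm_mat p n x $$ (k,l) + (if k = l then 1 else 0)
     else if x = y \<and> k = l then 2 * (real p - 1) else 0)"
proof -
  let ?g = "\<lambda>i. (if y = 0 then (if x = i then perm_mat p n i $$ (k,l) else 0)
     else if y = i then (if x = 0 \<and> k = l then 1 else 0)
     else (if x = y \<and> k = l then 1 else 0)) +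
     (if x = 0 then (if y = i then perm_mat p n i $$ (l,k) else 0)
     else if x = i then (if y = 0 \<and> l = k then 1 else 0)
     else (if y = x \<and> l = k then 1 else 0))"
  have "schreier_adj p (Suc n) $$ (x+(p+1)*k, y+(p+1)*l) =
    (\<Sum>i\<in>{1..p}. perm_mat p (Suc n) i $$ (x+(p+1)*k, y+(p+1)*l) + perm_mat p (Suc n) i $$ (y+(p+1)*l, x+(p+1)*k))"
    by (rule schreier_adj_index[OF idx_bound[OF xy(1) kl(1)] idx_bound[OF xy(2) kl(2)]])
  also have "\<dots> = (\<Sum>i\<in>{1..p}. ?g i)"
  proof (rule sum.cong[OF refl])
    fix i assume "i \<in> {1..p}"
    then have i1: "1 \<le> i" and i2: "i \<le> p" by auto
    show "perm_mat p (Suc n) i $$ (x+(p+1)*k, y+(p+1)*l) + perm_mat p (Suc n) i $$ (y+(p+1)*l, x+(p+1)*k) = ?g i"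
      by (simp only: perm_mat_Suc[OF i1 i2 xy kl] perm_mat_Suc[OF i1 i2 xy(2,1) kl(2,1)])
  qed
  also have "\<dots> = (if x = 0 then (if y = 0 then 0 else (if k = l then 1 else 0) + perm_mat p n y $$ (l,k))
     else if y = 0 then perm_mat p n x $$ (k,l) + (if k = l then 1 else 0)
     else if x = y \<and> k = l then 2 * (real p - 1) else 0)"
  proof (cases "x = 0")
    case x0: True
    show ?thesis
    proof (cases "y = 0")
      case True
      then show ?thesis using x0 by (simp add: sum.neutral)
    next
      case False
      then have "?g i = (if y = i then (if k = l then 1 else 0) + perm_mat p n i $$ (l,k) else 0)" for i
        using x0 by auto
      then show ?thesis using x0 False xy by (simp add: sum.If_cases)
    qed
  next
    case x0: False
    show ?thesis
    proof (cases "y = 0")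
      case True
      then have "?g i = (if x = i then perm_mat p n i $$ (k,l) + (if k = l then 1 else 0) else 0)" for i
        using x0 by auto
      then show ?thesis using x0 True xy by (simp add: sum.If_cases)
    next
      case False
      then have "?g i = (if y = i then 0 else 2 * (if x = y \<and> k = l then 1 else 0))" for i
        using x0 by auto
      then show ?thesis using x0 False xy sum_count[of y p] by simp
    qed
  qed
  finally show ?thesis .
qed


lemma sum_blocks: fixes g :: "nat \<Rightarrow> 'a::comm_monoid_add" and p N :: nat shows "(\<Sum>r<p*N. g r) = (\<Sum>j<p. \<Sum>k<N. g (j*N + k))"
proof (induction p)
  case 0 then show ?case by simp
next
  case (Suc p)
  have "(\<Sum>r<Suc p*N. g r) = (\<Sum>r<p*N. g r) + (\<Sum>r\<in>{p*N..<p*N+N}. g r)"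
    by (simp add: lessThan_atLeast0 add.commute sum.atLeastLessThan_concat)
  also have "(\<Sum>r\<in>{p*N..<p*N+N}. g r) = (\<Sum>k<N. g (p*N + k))"
    by (simp add: sum.shift_bounds_nat_ivl[of g 0 "p*N" N, simplified] lessThan_atLeast0 add.commute)
  finally show ?case using Suc by simp
qed

lemma sum_shift1: "(\<Sum>j<p. f (Suc j)) = (\<Sum>i\<in>{1..p}. f i)"
  by (induction p) (auto simp: atLeastAtMostSuc_conv add.commute)

definition Bmat :: "nat \<Rightarrow> nat \<Rightarrow> real mat" where
  "Bmat p n = mat (p*(p+1)^n) ((p+1)^n) (\<lambda>(r,a). (if r mod (p+1)^n = a then 1 else 0)
      + perm_mat p n (r div (p+1)^n + 1) $$ (r mod (p+1)^n, a))"

lemma Bmat_index: "r < p*(p+1)^n \<Longrightarrow> a < (p+1)^n \<Longrightarrow> Bmat p n $$ (r,a) =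
  (if r mod (p+1)^n = a then 1 else 0) + perm_mat p n (r div (p+1)^n + 1) $$ (r mod (p+1)^n, a)"
  by (simp add: Bmat_def)

lemma Bmat_dims[simp]: "dim_row (Bmat p n) = p*(p+1)^n" "dim_col (Bmat p n) = (p+1)^n"
  by (simp_all add: Bmat_def)

lemma Bmat_carrier[simp]: "Bmat p n \<in> carrier_mat (p*(p+1)^n) ((p+1)^n)"
  by (simp add: Bmat_def)

lemma inner_sum:
  assumes i: "1 \<le> i" "i \<le> p" and ab: "a < (p+1)^n" "b < (p+1)^n"
  shows "(\<Sum>k<(p+1)^n. ((if k = a then 1 else 0) + perm_mat p n i $$ (k,a)) *
                      ((if k = b then 1 else 0) + perm_mat p n i $$ (k,b)))
    = 2 * (if a = b then 1 else 0) + perm_mat p n i $$ (a,b) + perm_mat p n i $$ (b,a)"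
proof -
  let ?N = "(p+1)^n"
  let ?P = "perm_mat p n i"
  have s1: "(\<Sum>k<?N. (if k = a then 1 else 0) * (if k = b then 1 else (0::real))) = (if a = b then 1 else 0)"
    using ab by (simp add: if_distrib[of "\<lambda>x. x * _"] sum.delta cong: if_cong)
  have s2: "(\<Sum>k<?N. (if k = a then 1 else 0) * ?P $$ (k,b)) = ?P $$ (a,b)"
    using ab by (simp add: if_distrib[of "\<lambda>x. x * _"] sum.delta cong: if_cong)
  have s3: "(\<Sum>k<?N. ?P $$ (k,a) * (if k = b then 1 else 0)) = ?P $$ (b,a)"
    using ab by (simp add: if_distrib[of "\<lambda>x. _ * x"] sum.delta cong: if_cong)
  have s4: "(\<Sum>k<?N. ?P $$ (k,a) * ?P $$ (k,b)) = (if a = b then 1 else 0)"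
  proof -
    have "(\<Sum>k<?N. ?P $$ (k,a) * ?P $$ (k,b)) =
       (\<Sum>k<?N. if k = sgi p n i a then (if sgi p n i a = sgi p n i b then 1 else 0) else 0)"
      by (rule sum.cong) (use i ab in \<open>auto simp: perm_mat_sgi\<close>)
    also have "\<dots> = (if sgi p n i a = sgi p n i b then 1 else 0)"
      using sgi_bound[OF i(2)] by simp
    also have "(sgi p n i a = sgi p n i b) = (a = b)"
      using sgi_inj[OF i] word_of_inj[OF ab] by metis
    finally show ?thesis .
  qed
  have "(\<Sum>k<?N. ((if k = a then 1 else 0) + ?P $$ (k,a)) * ((if k = b then 1 else 0) + ?P $$ (k,b)))
     = (\<Sum>k<?N. (if k = a then 1 else 0) * (if k = b then 1 else (0::real))) +
       (\<Sum>k<?N. (if k = a then 1 else 0) * ?P $$ (k,b)) +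
       (\<Sum>k<?N. ?P $$ (k,a) * (if k = b then 1 else 0)) +
       (\<Sum>k<?N. ?P $$ (k,a) * ?P $$ (k,b))"
    by (simp add: algebra_simps sum.distrib)
  then show ?thesis using s1 s2 s3 s4 by simp
qed

lemma BtB:
  assumes ab: "a < (p+1)^n" "b < (p+1)^n"
  shows "(transpose_mat (Bmat p n) * Bmat p n) $$ (a,b) =
    2 * real p * (if a = b then 1 else 0) + schreier_adj p n $$ (a,b)"
proof -
  let ?N = "(p+1)^n"
  have "(transpose_mat (Bmat p n) * Bmat p n) $$ (a,b) = (\<Sum>r<p*?N. Bmat p n $$ (r,a) * Bmat p n $$ (r,b))"
    using ab by (simp add: Bmat_def scalar_prod_def lessThan_atLeast0)
  also have "\<dots> = (\<Sum>j<p. \<Sum>k<?N. Bmat p n $$ (j*?N+k,a) * Bmat p n $$ (j*?N+k,b))"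
    by (rule sum_blocks)
  also have "\<dots> = (\<Sum>j<p. 2 * (if a = b then 1 else 0) + perm_mat p n (Suc j) $$ (a,b) + perm_mat p n (Suc j) $$ (b,a))"
  proof (rule sum.cong[OF refl])
    fix j assume j: "j \<in> {..<p}"
    have "(\<Sum>k<?N. Bmat p n $$ (j*?N+k,a) * Bmat p n $$ (j*?N+k,b)) =
      (\<Sum>k<?N. ((if k = a then 1 else 0) + perm_mat p n (Suc j) $$ (k,a)) *
                      ((if k = b then 1 else 0) + perm_mat p n (Suc j) $$ (k,b)))"
    proof (rule sum.cong[OF refl])
      fix k assume k: "k \<in> {..<?N}"
      have r: "j*?N+k < p*?N" using j k
        by (metis lessThan_iff add.commute mult.commute mult_Suc_right nat_add_left_cancel_less
              order_less_le_trans mult_le_mono2 Suc_leI)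
      have md: "(j*?N+k) mod ?N = k" "(j*?N+k) div ?N = j" using k by auto
      show "Bmat p n $$ (j*?N+k,a) * Bmat p n $$ (j*?N+k,b) = ((if k = a then 1 else 0) + perm_mat p n (Suc j) $$ (k,a)) *
                      ((if k = b then 1 else 0) + perm_mat p n (Suc j) $$ (k,b))"
        by (simp only: Bmat_index[OF r ab(1)] Bmat_index[OF r ab(2)] md) simp
    qed
    also have "\<dots> = 2 * (if a = b then 1 else 0) + perm_mat p n (Suc j) $$ (a,b) + perm_mat p n (Suc j) $$ (b,a)"
      using j ab by (intro inner_sum) auto
    finally show "(\<Sum>k<?N. Bmat p n $$ (j*?N+k,a) * Bmat p n $$ (j*?N+k,b)) = \<dots>" .
  qed
  also have "\<dots> = 2 * real p * (if a = b then 1 else 0) + (\<Sum>j<p. perm_mat p n (Suc j) $$ (a,b) + perm_mat p n (Suc j) $$ (b,a))"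
    by (simp add: sum.distrib)
  also have "(\<Sum>j<p. perm_mat p n (Suc j) $$ (a,b) + perm_mat p n (Suc j) $$ (b,a)) = schreier_adj p n $$ (a,b)"
    using sum_shift1[of "\<lambda>i. perm_mat p n i $$ (a,b) + perm_mat p n i $$ (b,a)" p] schreier_adj_index[OF ab] by simp
  finally show ?thesis .
qed


lemma det_perm_sim:
  assumes A: "A \<in> carrier_mat n n" and s: "s permutes {0..<n}"
  shows "det (mat n n (\<lambda>(i,j). A $$ (s i, s j))) = det A"
proof -
  let ?A1 = "mat n n (\<lambda>(i,j). A $$ (s i, j))"
  have d1: "det ?A1 = signof s * det A" by (rule det_permute_rows[OF A s])
  have A1: "?A1 \<in> carrier_mat n n" by simp
  have "transpose_mat (mat n n (\<lambda>(i,j). A $$ (s i, s j))) = mat n n (\<lambda>(i,j). transpose_mat ?A1 $$ (s i, j))"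
    using s by (intro eq_matI) (auto simp: permutes_in_image)
  then have "det (transpose_mat (mat n n (\<lambda>(i,j). A $$ (s i, s j)))) = signof s * det (transpose_mat ?A1)"
    using det_permute_rows[OF _ s, of "transpose_mat ?A1"] by simp
  then have "det (mat n n (\<lambda>(i,j). A $$ (s i, s j))) = signof s * (signof s * det A)"
    using det_transpose[OF A1] d1 det_transpose[of "mat n n (\<lambda>(i,j). A $$ (s i, s j))" n] by simp
  also have "signof s * (signof s * det A) = (signof s * signof s) * det A" by (simp add: ac_simps)
  also have "(signof s * signof s :: 'a) = 1" by (simp add: sign_def)
  finally show ?thesis by simp
qed

definition sig :: "nat \<Rightarrow> nat \<Rightarrow> nat \<Rightarrow> nat" where
  "sig p n t = (if t < (p+1)^Suc n then t div (p+1)^n + (p+1) * (t mod (p+1)^n) else t)"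

lemma sig_permutes: "sig p n permutes {0..<(p+1)^Suc n}"
proof -
  let ?N = "(p+1)^n" let ?S = "{0..<(p+1)^Suc n}"
  have dv: "t div ?N \<le> p" if "t < (p+1)^Suc n" for t
    using that by (metis Suc_eq_plus1 less_Suc_eq_le less_mult_imp_div_less power_Suc mult.commute)
  have img: "sig p n ` ?S \<subseteq> ?S"
  proof
    fix s assume "s \<in> sig p n ` ?S"
    then obtain t where t: "t < (p+1)^Suc n" "s = sig p n t" by auto
    then show "s \<in> ?S" using idx_bound[OF dv[OF t(1)], of "t mod ?N"] by (simp add: sig_def)
  qed
  have inj: "inj_on (sig p n) ?S"
  proof (rule inj_onI)
    fix t u assume t: "t \<in> ?S" and u: "u \<in> ?S" and e: "sig p n t = sig p n u"
    let ?x = "t div ?N" let ?y = "u div ?N"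
    have e': "?x + (p+1) * (t mod ?N) = ?y + (p+1) * (u mod ?N)" using e t u by (simp add: sig_def)
    have x: "?x < p+1" "?y < p+1" using dv t u by (auto simp: le_imp_less_Suc)
    have "(?x + (p+1) * (t mod ?N)) mod (p+1) = ?x" using x by (simp only: mod_mult_self2) simp
    moreover have "(?y + (p+1) * (u mod ?N)) mod (p+1) = ?y" using x by (simp only: mod_mult_self2) simp
    ultimately have xy: "?x = ?y" using e' by metis
    have "(?x + (p+1) * (t mod ?N)) div (p+1) = t mod ?N" using x by (simp only: div_mult_self2) simp
    moreover have "(?y + (p+1) * (u mod ?N)) div (p+1) = u mod ?N" using x by (simp only: div_mult_self2) simp
    ultimately have "t mod ?N = u mod ?N" using e' by metis
    with xy show "t = u" by (metis div_mult_mod_eq)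
  qed
  have "sig p n ` ?S = ?S" using endo_inj_surj[OF _ img inj] by simp
  then have "bij_betw (sig p n) ?S ?S" using inj by (simp add: bij_betw_def)
  then show ?thesis by (rule bij_imp_permutes) (simp add: sig_def)
qed


lemma charmat_index: "A \<in> carrier_mat n n \<Longrightarrow> i < n \<Longrightarrow> j < n \<Longrightarrow>
  char_poly_matrix A $$ (i,j) = (if i = j then [:0,1:] else 0) + [: - A $$ (i,j) :]"
  by (simp add: char_poly_matrix_def)

definition Bp :: "nat \<Rightarrow> nat \<Rightarrow> real poly mat" where
  "Bp p n = map_mat (\<lambda>x. [:x:]) (Bmat p n)"

definition cpol :: "nat \<Rightarrow> real poly" where
  "cpol p = [:-2*(real p - 1), 1:]"

definition Mblk :: "nat \<Rightarrow> nat \<Rightarrow> real poly mat" where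
  "Mblk p n = four_block_mat ([:0,1:] \<cdot>\<^sub>m 1\<^sub>m ((p+1)^n)) (- transpose_mat (Bp p n))
      (- Bp p n) (cpol p \<cdot>\<^sub>m 1\<^sub>m (p*(p+1)^n))"

lemma Bp_dims[simp]: "dim_row (Bp p n) = p*(p+1)^n" "dim_col (Bp p n) = (p+1)^n"
  by (simp_all add: Bp_def)

lemma Bp_carrier[simp]: "Bp p n \<in> carrier_mat (p*(p+1)^n) ((p+1)^n)"
  by (simp add: Bp_def Bmat_def)

lemma Mblk_eq: "mat ((p+1)^Suc n) ((p+1)^Suc n)
   (\<lambda>(i,j). char_poly_matrix (schreier_adj p (Suc n)) $$ (sig p n i, sig p n j)) = Mblk p n"
proof -
  let ?N = "(p+1)^n" let ?T = "(p+1)^Suc n"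
  have T: "?T = ?N + p*?N" by simp
  have Np: "?N > 0" by simp
  show ?thesis
  proof (rule eq_matI)
    show "dim_row (mat ?T ?T (\<lambda>(i,j). char_poly_matrix (schreier_adj p (Suc n)) $$ (sig p n i, sig p n j))) = dim_row (Mblk p n)"
      by (simp add: Mblk_def)
    show "dim_col (mat ?T ?T (\<lambda>(i,j). char_poly_matrix (schreier_adj p (Suc n)) $$ (sig p n i, sig p n j))) = dim_col (Mblk p n)"
      by (simp add: Mblk_def)
    fix t u assume "t < dim_row (Mblk p n)" "u < dim_col (Mblk p n)"
    then have t: "t < ?T" and u: "u < ?T" by (simp_all add: Mblk_def)
    have dv: "v div ?N \<le> p" if "v < ?T" for v
      using that by (metis Suc_eq_plus1 less_Suc_eq_le less_mult_imp_div_less power_Suc mult.commute)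
    have sg: "sig p n v = v div ?N + (p+1) * (v mod ?N)" if "v < ?T" for v using that by (simp add: sig_def)
    have sinj: "(sig p n t = sig p n u) = (t = u)"
      using permutes_inj[OF sig_permutes, of p n] by (auto dest: injD)
    have sb: "sig p n v < ?T" if "v < ?T" for v
    proof -
      have "sig p n v \<in> {0..<?T} \<longleftrightarrow> v \<in> {0..<?T}" by (rule permutes_in_image[OF sig_permutes])
      then show ?thesis using that by simp
    qed
    have adj: "schreier_adj p (Suc n) $$ (sig p n t, sig p n u) =
      (if t div ?N = 0 then (if u div ?N = 0 then 0 else (if t mod ?N = u mod ?N then 1 else 0) + perm_mat p n (u div ?N) $$ (u mod ?N, t mod ?N))
     else if u div ?N = 0 then perm_mat p n (t div ?N) $$ (t mod ?N, u mod ?N) + (if t mod ?N = u mod ?N then 1 else 0)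
     else if t div ?N = u div ?N \<and> t mod ?N = u mod ?N then 2 * (real p - 1) else 0)"
      unfolding sg[OF t] sg[OF u] by (rule adj_Suc[OF dv[OF t] dv[OF u]]) simp_all
    have ch: "mat ?T ?T (\<lambda>(i,j). char_poly_matrix (schreier_adj p (Suc n)) $$ (sig p n i, sig p n j)) $$ (t,u)
      = (if t = u then [:0,1:] else 0) + [: - schreier_adj p (Suc n) $$ (sig p n t, sig p n u) :]"
      using t u sb[OF t] sb[OF u] sinj by (simp add: charmat_index[OF schreier_adj_carrier])
    have tu: "(t div ?N = u div ?N \<and> t mod ?N = u mod ?N) = (t = u)" by (metis div_mult_mod_eq)
    show "mat ?T ?T (\<lambda>(i,j). char_poly_matrix (schreier_adj p (Suc n)) $$ (sig p n i, sig p n j)) $$ (t,u) = Mblk p n $$ (t,u)"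
    proof (cases "t < ?N")
      case tN: True
      have t0: "t div ?N = 0" "t mod ?N = t" using tN by auto
      show ?thesis
      proof (cases "u < ?N")
        case True
        have u0: "u div ?N = 0" "u mod ?N = u" using True by auto
        show ?thesis unfolding ch adj using tN True t0 u0 by (simp add: Mblk_def)
      next
        case False
        have u1: "u div ?N \<noteq> 0" "(u - ?N) mod ?N = u mod ?N" "(u - ?N) div ?N + 1 = u div ?N"
          using False Np by (auto simp: le_mod_geq le_div_geq)
        have un: "u - ?N < p * ?N" using u T False by linarith
        show ?thesis unfolding ch adj using tN False t0 u1 un tN
          by (simp add: Mblk_def Bp_def Bmat_index eq_commute[of t])
      qed
    next
      case tN: False
      have t1: "t div ?N \<noteq> 0" "(t - ?N) mod ?N = t mod ?N" "(t - ?N) div ?N + 1 = t div ?N"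
        using tN Np by (auto simp: le_mod_geq le_div_geq)
      have tn: "t - ?N < p * ?N" using t T tN by linarith
      show ?thesis
      proof (cases "u < ?N")
        case True
        have u0: "u div ?N = 0" "u mod ?N = u" using True by auto
        show ?thesis unfolding ch adj using tN True t1 u0 tn
          by (simp add: Mblk_def Bp_def Bmat_index)
      next
        case False
        have u1: "u div ?N \<noteq> 0"
          using False Np by (auto simp: le_div_geq)
        have un: "u - ?N < p * ?N" using u T False by linarith
        have "(t - ?N = u - ?N) = (t = u)" using tN False by auto
        then show ?thesis unfolding ch adj using tN False t1 u1 un tn tu
          by (auto simp: Mblk_def cpol_def)
      qed
    qed
  qed
qed


lemma sum_const_poly: "(\<Sum>r\<in>S. [:f r:]) = [:\<Sum>r\<in>S. f r:]"
  by (induction S rule: infinite_finite_induct) auto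

lemma BpBp: assumes "i < (p+1)^n" "j < (p+1)^n"
  shows "(transpose_mat (Bp p n) * Bp p n) $$ (i,j) = [: (transpose_mat (Bmat p n) * Bmat p n) $$ (i,j) :]"
  using assms by (simp add: Bp_def scalar_prod_def sum_const_poly mult.commute)

lemma fp_expand: "(fp p :: real poly) = [:0,1:] * cpol p - [: 2 * real p :]"
  by (simp add: fp_def cpol_def algebra_simps)

lemma char_step:
  assumes p: "p \<ge> 1"
  shows "char_poly (schreier_adj p (Suc n)) =
    cpol p ^ ((p-1)*(p+1)^n) * pcompose (char_poly (schreier_adj p n)) (fp p)"
proof -
  have pch: "comm_ring_hom (\<lambda>q. pcompose q (fp p :: real poly))"
    by unfold_locales (auto simp: pcompose_add pcompose_mult pcompose_1)
  let ?N = "(p+1)^n" let ?m = "p*(p+1)^n" let ?T = "(p+1)^Suc n"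
  let ?X = "[:0,1:] :: real poly" let ?c = "cpol p" let ?B = "Bp p n"
  have T: "?T = ?N + ?m" by simp
  have "char_poly (schreier_adj p (Suc n)) = det (char_poly_matrix (schreier_adj p (Suc n)))"
    by (simp add: char_poly_def)
  also have "\<dots> = det (mat ?T ?T (\<lambda>(i,j). char_poly_matrix (schreier_adj p (Suc n)) $$ (sig p n i, sig p n j)))"
    by (rule det_perm_sim[symmetric, OF char_poly_matrix_closed[OF schreier_adj_carrier] sig_permutes])
  also have "\<dots> = det (Mblk p n)" by (simp only: Mblk_eq)
  finally have c1: "char_poly (schreier_adj p (Suc n)) = det (Mblk p n)" .
  define L where "L = four_block_mat (?c \<cdot>\<^sub>m 1\<^sub>m ?N) (0\<^sub>m ?N ?m) ?B (1\<^sub>m ?m)"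
  have cX: "?X \<cdot>\<^sub>m 1\<^sub>m ?N \<in> carrier_mat ?N ?N" "?c \<cdot>\<^sub>m 1\<^sub>m ?N \<in> carrier_mat ?N ?N"
    "?c \<cdot>\<^sub>m 1\<^sub>m ?m \<in> carrier_mat ?m ?m" "- transpose_mat ?B \<in> carrier_mat ?N ?m"
    "- ?B \<in> carrier_mat ?m ?N" "0\<^sub>m ?N ?m \<in> carrier_mat ?N ?m" "?B \<in> carrier_mat ?m ?N"
    "1\<^sub>m ?m \<in> carrier_mat ?m ?m" using Bp_carrier[of p n] by auto
  have Mc: "Mblk p n \<in> carrier_mat (?N + ?m) (?N + ?m)" unfolding Mblk_def using cX by auto
  have Lc: "L \<in> carrier_mat (?N + ?m) (?N + ?m)" unfolding L_def using cX by auto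
  define U1 where "U1 = (?X \<cdot>\<^sub>m 1\<^sub>m ?N) * (?c \<cdot>\<^sub>m 1\<^sub>m ?N) + (- transpose_mat ?B) * ?B"
  have prod: "Mblk p n * L = four_block_mat U1
      ((?X \<cdot>\<^sub>m 1\<^sub>m ?N) * 0\<^sub>m ?N ?m + (- transpose_mat ?B) * 1\<^sub>m ?m)
      ((- ?B) * (?c \<cdot>\<^sub>m 1\<^sub>m ?N) + (?c \<cdot>\<^sub>m 1\<^sub>m ?m) * ?B)
      ((- ?B) * 0\<^sub>m ?N ?m + (?c \<cdot>\<^sub>m 1\<^sub>m ?m) * 1\<^sub>m ?m)"
    unfolding Mblk_def L_def U1_def by (rule mult_four_block_mat[OF cX(1,4,5,3) cX(2,6,7,8)])
  have C0: "(- ?B) * (?c \<cdot>\<^sub>m 1\<^sub>m ?N) + (?c \<cdot>\<^sub>m 1\<^sub>m ?m) * ?B = 0\<^sub>m ?m ?N"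
  proof -
    have "(- ?B) * (?c \<cdot>\<^sub>m 1\<^sub>m ?N) = ?c \<cdot>\<^sub>m (- ?B)"
      by (simp only: mult_smult_distrib[OF cX(5) one_carrier_mat] right_mult_one_mat[OF cX(5)])
    moreover have "(?c \<cdot>\<^sub>m 1\<^sub>m ?m) * ?B = ?c \<cdot>\<^sub>m ?B"
      by (simp only: mult_smult_assoc_mat[OF one_carrier_mat cX(7)] left_mult_one_mat[OF cX(7)])
    ultimately show ?thesis by (intro eq_matI) auto
  qed
  have D: "(- ?B) * 0\<^sub>m ?N ?m + (?c \<cdot>\<^sub>m 1\<^sub>m ?m) * 1\<^sub>m ?m = ?c \<cdot>\<^sub>m 1\<^sub>m ?m"
    using cX by simp
  have U1c: "U1 \<in> carrier_mat ?N ?N" unfolding U1_def using cX by auto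
  have U1eq: "U1 = map_mat (\<lambda>q. pcompose q (fp p)) (char_poly_matrix (schreier_adj p n))"
  proof -
    have "(?X \<cdot>\<^sub>m 1\<^sub>m ?N) * (?c \<cdot>\<^sub>m 1\<^sub>m ?N) = ?X \<cdot>\<^sub>m (?c \<cdot>\<^sub>m 1\<^sub>m ?N)"
      using mult_smult_assoc_mat[OF one_carrier_mat cX(2), of ?X] by simp
    moreover have "(- transpose_mat ?B) * ?B = - (transpose_mat ?B * ?B)" by simp
    ultimately have U: "U1 = ?X \<cdot>\<^sub>m (?c \<cdot>\<^sub>m 1\<^sub>m ?N) + - (transpose_mat ?B * ?B)" unfolding U1_def by simp
    show ?thesis unfolding U
    proof (rule eq_matI)
      fix i j assume "i < dim_row (map_mat (\<lambda>q. pcompose q (fp p)) (char_poly_matrix (schreier_adj p n)))"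
        "j < dim_col (map_mat (\<lambda>q. pcompose q (fp p)) (char_poly_matrix (schreier_adj p n)))"
      then have ij: "i < ?N" "j < ?N" using char_poly_matrix_closed[OF schreier_adj_carrier[of p n]] by auto
      show "(?X \<cdot>\<^sub>m (?c \<cdot>\<^sub>m 1\<^sub>m ?N) + - (transpose_mat ?B * ?B)) $$ (i,j) =
        map_mat (\<lambda>q. pcompose q (fp p)) (char_poly_matrix (schreier_adj p n)) $$ (i,j)"
      proof -
        have L: "(?X \<cdot>\<^sub>m (?c \<cdot>\<^sub>m 1\<^sub>m ?N) + - (transpose_mat ?B * ?B)) $$ (i,j) =
          ?X * (?c * (if i = j then 1 else 0)) - [: 2*real p*(if i=j then 1 else 0) + schreier_adj p n $$ (i,j) :]"
        proof -
          have bb: "(transpose_mat ?B * ?B) $$ (i,j) = [: 2*real p*(if i=j then 1 else 0) + schreier_adj p n $$ (i,j) :]"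
            using BpBp[OF ij] BtB[OF ij] by simp
          show ?thesis using ij by (simp add: bb del: index_mult_mat(1))
        qed
        have R: "map_mat (\<lambda>q. pcompose q (fp p)) (char_poly_matrix (schreier_adj p n)) $$ (i,j) =
          pcompose ((if i = j then ?X else 0) + [: - schreier_adj p n $$ (i,j) :]) (fp p)"
          using ij char_poly_matrix_closed[OF schreier_adj_carrier[of p n]]
          by (simp add: charmat_index[OF schreier_adj_carrier])
        show ?thesis unfolding L R
          by (cases "i = j") (simp_all add: pcompose_add pcompose_pCons fp_expand algebra_simps)
      qed
    qed (use char_poly_matrix_closed[OF schreier_adj_carrier[of p n]] in auto)
  qed
  have "det (Mblk p n) * det L = det (Mblk p n * L)" by (rule det_mult[OF Mc Lc, symmetric])
  also have "\<dots> = det U1 * det (?c \<cdot>\<^sub>m 1\<^sub>m ?m)"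
    unfolding prod C0 D by (rule det_four_block_mat_lower_left_zero[OF U1c _ refl]) (use cX in auto)
  also have "det U1 = pcompose (char_poly (schreier_adj p n)) (fp p)"
    unfolding U1eq comm_ring_hom.hom_det[OF pch] char_poly_def ..
  also have "det (?c \<cdot>\<^sub>m 1\<^sub>m ?m) = ?c ^ ?m" by simp
  finally have e1: "det (Mblk p n) * det L = pcompose (char_poly (schreier_adj p n)) (fp p) * ?c ^ ?m" .
  have dL: "det L = ?c ^ ?N" unfolding L_def
    by (subst det_four_block_mat_upper_right_zero[OF cX(2) refl cX(7,8)]) simp
  have m: "?m = (p-1)*?N + ?N" using p by (cases p) auto
  have cnz: "?c ^ ?N \<noteq> 0" by (simp add: cpol_def)
  have "det (Mblk p n) * ?c ^ ?N = (pcompose (char_poly (schreier_adj p n)) (fp p) * ?c ^ ((p-1)*?N)) * ?c ^ ?N"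
    using e1 unfolding dL m power_add by (simp add: ac_simps)
  then have "det (Mblk p n) = pcompose (char_poly (schreier_adj p n)) (fp p) * ?c ^ ((p-1)*?N)"
    using cnz by simp
  then show ?thesis using c1 by (simp add: ac_simps)
qed


lemma char_base: "char_poly (schreier_adj p 0) = [: - 2 * real p, 1 :]"
proof -
  have A: "schreier_adj p 0 \<in> carrier_mat 1 1" using schreier_adj_carrier[of p 0] by simp
  have ut: "upper_triangular (schreier_adj p 0)" using A by (auto simp: upper_triangular_def)
  have e: "schreier_adj p 0 $$ (0,0) = 2 * real p"
    by (simp add: schreier_adj_index perm_mat_index word_of_def)
  have "diag_mat (schreier_adj p 0) = [schreier_adj p 0 $$ (0,0)]"
    using A by (simp add: diag_mat_def)
  then show ?thesis using char_poly_upper_triangular[OF A ut] e by simp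
qed

lemma fp_iter_0[simp]: "fp_iter p 0 = [:0,1:]" by (simp add: fp_iter_def)

lemma fp_iter_Suc: "fp_iter p (Suc i) = pcompose (fp p) (fp_iter p i)"
  by (simp add: fp_iter_def)

lemma fp_iter_Suc': "fp_iter p (Suc i) = pcompose (fp_iter p i) (fp p)"
proof (induction i)
  case 0 then show ?case by (simp add: fp_iter_Suc pcompose_pCons)
next
  case (Suc i)
  then show ?case by (simp add: fp_iter_Suc pcompose_assoc)
qed

lemma pcompose_power: "pcompose (q ^ k) r = (pcompose q r) ^ k"
  by (induction k) (simp_all add: pcompose_mult pcompose_1)

definition Qp :: "nat \<Rightarrow> nat \<Rightarrow> real poly" where
  "Qp p n = (\<Prod>i<n. (fp_iter p i - [: 2 * (real p - 1) :]) ^ ((p - 1) * (p + 1) ^ (n - i - 1)))"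

lemma char_formula:
  assumes p: "p \<ge> 1"
  shows "char_poly (schreier_adj p n) = (fp_iter p n - [: 2 * real p :]) * Qp p n"
proof (induction n)
  case 0 then show ?case by (simp add: char_base Qp_def)
next
  case (Suc n)
  have c: "fp_iter p 0 - [: 2 * (real p - 1) :] = cpol p" by (simp add: cpol_def)
  have "Qp p (Suc n) = cpol p ^ ((p-1)*(p+1)^n) *
     (\<Prod>i<n. (fp_iter p (Suc i) - [: 2 * (real p - 1) :]) ^ ((p - 1) * (p + 1) ^ (n - i - 1)))"
    unfolding Qp_def prod.lessThan_Suc_shift c by simp
  also have "(\<Prod>i<n. (fp_iter p (Suc i) - [: 2 * (real p - 1) :]) ^ ((p - 1) * (p + 1) ^ (n - i - 1)))
     = pcompose (Qp p n) (fp p)"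
    unfolding Qp_def pcompose_prod pcompose_power pcompose_diff fp_iter_Suc' by simp
  finally have Q: "Qp p (Suc n) = cpol p ^ ((p-1)*(p+1)^n) * pcompose (Qp p n) (fp p)" .
  show ?case
    unfolding char_step[OF p] Suc Q pcompose_mult pcompose_diff fp_iter_Suc'[symmetric] pcompose_const
    by (simp add: ac_simps)
qed

lemma fp_iter_split:
  "(fp_iter p n - [: 2 * real p :] :: real poly) = [: - 2 * real p, 1 :] * (\<Prod>i<n. fp_iter p i + [: 2 :])"
proof (induction n)
  case 0 then show ?case by simp
next
  case (Suc n)
  let ?g = "fp_iter p n :: real poly"
  have "fp_iter p (Suc n) - [: 2 * real p :] = (?g + [:2:]) * (?g - [: 2 * real p :])"
  proof (rule poly_ext)
    fix x
    show "poly (fp_iter p (Suc n) - [: 2 * real p :]) x = poly ((?g + [:2:]) * (?g - [: 2 * real p :])) x"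
      by (simp add: fp_iter_Suc poly_pcompose fp_def algebra_simps power2_eq_square)
  qed
  then show ?case using Suc by (simp add: ac_simps)
qed


lemma order_prod_nz: "finite S \<Longrightarrow> (\<And>i. i \<in> S \<Longrightarrow> f i \<noteq> 0) \<Longrightarrow>
  order x (\<Prod>i\<in>S. f i) = (\<Sum>i\<in>S. order x (f i :: complex poly))"
proof (induction S rule: finite_induct)
  case empty then show ?case by simp
next
  case (insert a S)
  have "(\<Prod>i\<in>S. f i) \<noteq> 0" using insert by auto
  then show ?case using insert by (simp add: order_mult)
qed

lemma order_pow_nz: "(q :: complex poly) \<noteq> 0 \<Longrightarrow> order x (q ^ k) = k * order x q"
  by (induction k) (simp_all add: order_mult)

lemma degree_fp_iter: "degree (fp_iter p i :: complex poly) = 2 ^ i"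
proof (induction i)
  case 0 then show ?case by simp
next
  case (Suc i)
  have d: "degree (fp p :: complex poly) = 2" by (simp add: fp_def)
  show ?case by (simp only: fp_iter_Suc degree_pcompose d Suc) simp
qed

lemma fp_iter_minus_ne: "(fp_iter p i :: complex poly) - [:c:] \<noteq> 0"
proof
  assume "fp_iter p i - [:c:] = 0"
  then have "fp_iter p i = [:c:]" by simp
  then show False using degree_fp_iter[of p i] by simp
qed

lemma fp_iter_ne_const: "(fp_iter p i :: complex poly) \<noteq> [:c:]"
  using degree_fp_iter[of p i] by (metis degree_pCons_0 power_not_zero zero_neq_numeral)

lemma map_fp_iter: "map_poly complex_of_real (fp_iter p i) = fp_iter p i"
proof (induction i)
  case 0 then show ?case by simp
next
  case (Suc i)
  have "map_poly complex_of_real (fp p) = fp p" by (simp add: fp_def)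
  then show ?case using Suc by (simp add: fp_iter_Suc of_real_hom.map_poly_pcompose)
qed

lemma map_const_c: "map_poly complex_of_real [:c:] = [:complex_of_real c:]"
  by (rule poly_eqI) (simp add: coeff_map_poly coeff_pCons split: nat.split)

lemma test_eq: "(q :: complex poly) - [:-2:] = q + [:2:]" by simp


theorem theorem3p9:
  fixes p n :: nat
  assumes "p \<ge> 1" and "n \<ge> 1"
  shows "char_poly (schreier_adj p n) =
           [: - 2 * real p, 1 :]
           * (\<Prod>i<n. fp_iter p i + [: 2 :])
           * (\<Prod>i<n. (fp_iter p i - [: 2 * (real p - 1) :]) ^ ((p - 1) * (p + 1) ^ (n - i - 1)))
       \<and> (\<forall>x :: complex.
           order x (char_poly (map_mat complex_of_real (schreier_adj p n))) =
             (if x = 2 * of_nat p then 1 else 0)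
             + (\<Sum>i<n. order x (fp_iter p i - [: - 2 :]))
             + (\<Sum>i<n. (p - 1) * (p + 1) ^ (n - i - 1)
                         * order x (fp_iter p i - [: 2 * (of_nat p - 1) :])))"
proof -
  have P1: "char_poly (schreier_adj p n) =
           [: - 2 * real p, 1 :]
           * (\<Prod>i<n. fp_iter p i + [: 2 :])
           * (\<Prod>i<n. (fp_iter p i - [: 2 * (real p - 1) :]) ^ ((p - 1) * (p + 1) ^ (n - i - 1)))"
    unfolding char_formula[OF assms(1)] fp_iter_split Qp_def ..
  let ?F = "[: - 2 * of_nat p, 1 :] :: complex poly"
  let ?G = "(\<Prod>i<n. fp_iter p i - [: - 2 :]) :: complex poly"
  let ?H = "(\<Prod>i<n. (fp_iter p i - [: 2 * (of_nat p - 1) :]) ^ ((p - 1) * (p + 1) ^ (n - i - 1))) :: complex poly"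
  have P2: "char_poly (map_mat complex_of_real (schreier_adj p n)) = ?F * ?G * ?H"
  proof -
    have "char_poly (map_mat complex_of_real (schreier_adj p n)) =
      map_poly complex_of_real (char_poly (schreier_adj p n))"
      by (rule of_real_hom.char_poly_hom[OF schreier_adj_carrier])
    also have "\<dots> = ?F * ?G * ?H"
    proof -
      interpret mp: map_poly_idom_hom complex_of_real ..
      show ?thesis unfolding P1 mp.hom_mult mp.hom_prod mp.hom_power mp.hom_minus mp.hom_add map_fp_iter
          mp.map_poly_pCons_hom
        by (simp add: test_eq map_const_c)
    qed
    finally show ?thesis .
  qed
  have Fnz: "?F \<noteq> 0" by simp
  have Gnz: "?G \<noteq> 0" using fp_iter_minus_ne by (simp add: prod_zero_iff)
  have Hnz: "?H \<noteq> 0" using fp_iter_minus_ne by (simp add: prod_zero_iff)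
  have "order x (char_poly (map_mat complex_of_real (schreier_adj p n))) =
    (if x = 2 * of_nat p then 1 else 0)
             + (\<Sum>i<n. order x (fp_iter p i - [: - 2 :]))
             + (\<Sum>i<n. (p - 1) * (p + 1) ^ (n - i - 1)
                         * order x (fp_iter p i - [: 2 * (of_nat p - 1) :]))" for x
  proof -
    have oF: "order x ?F = (if x = 2 * of_nat p then 1 else 0)"
    proof (cases "x = 2 * of_nat p")
      case True
      then show ?thesis using order_power_n_n[of x 1] by simp
    next
      case False
      have "poly ?F x \<noteq> 0" using False by (simp add: algebra_simps)
      from order_0I[OF this] False show ?thesis by simp
    qed
    have oG: "order x ?G = (\<Sum>i<n. order x (fp_iter p i - [: - 2 :]))"
      by (rule order_prod_nz) (simp_all add: fp_iter_minus_ne fp_iter_ne_const)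
    have oH: "order x ?H = (\<Sum>i<n. (p - 1) * (p + 1) ^ (n - i - 1)
                         * order x (fp_iter p i - [: 2 * (of_nat p - 1) :]))"
    proof -
      have "order x ?H = (\<Sum>i<n. order x ((fp_iter p i - [: 2 * (of_nat p - 1) :]) ^ ((p - 1) * (p + 1) ^ (n - i - 1))))"
        by (rule order_prod_nz) (simp_all add: fp_iter_minus_ne fp_iter_ne_const)
      also have "\<dots> = (\<Sum>i<n. (p - 1) * (p + 1) ^ (n - i - 1)
                         * order x (fp_iter p i - [: 2 * (of_nat p - 1) :]))"
        by (rule sum.cong[OF refl]) (rule order_pow_nz[OF fp_iter_minus_ne])
      finally show ?thesis .
    qed
    have FG: "?F * ?G \<noteq> 0" using Fnz Gnz by (simp only: mult_eq_0_iff) blast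
    have FGH: "?F * ?G * ?H \<noteq> 0" using FG Hnz by (simp only: mult_eq_0_iff) blast
    show ?thesis
      unfolding P2 order_mult[OF FGH] order_mult[OF FG] oF oG oH ..
  qed
  then show ?thesis using P1 by blast
qed

end
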